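(* Let $n\ge 1$ and let $(\xi_i,\mathcal{F}_i)_{i=0,\dots,n}$ be a sequence of real-valued martingale differences on a probability space $(\Omega,\mathcal{F},\mathbf{P})$, with $\xi_0=0$, $\{\emptyset,\Omega\}=\mathcal{F}_0\subseteq\cdots\subseteq\mathcal{F}_n\subseteq\mathcal{F}$ and $\mathbf{E}[\xi_i\mid\mathcal{F}_{i-1}]=0$ for $i=1,\dots,n$. Let $S_k=\sum_{i=1}^k\xi_i$. Let $\alpha\in(0,1)$ and assume $$C_n:=\sum_{i=1}^n\mathbf{E}\big[\xi_i^2\exp\{(\xi_i^+)^\alpha\}\big]<\infty .$$ Define $\Upsilon(S)_k=\sum_{i=1}^k\mathbf{E}\big[\xi_i^2\exp\{(\xi_i^+)^\alpha\}\mid\mathcal{F}_{i-1}\big]$ for $k\in[1,n]$. Then for all $x,u>0$, $$\mathbf{P}\big(S_k\ge x \text{ and } \Upsilon(S)_k\le u \text{ for some } k\in[1,n]\big)\le \begin{cases} \exp\Big\{-\dfrac{x^2}{2u}\Big\}+C_n\Big(\dfrac{x}{u}\Big)^{2/(1-\alpha)}\exp\Big\{-\Big(\dfrac{u}{x}\Big)^{\alpha/(1-\alpha)}\Big\} & \text{if } 0\le x<u^{1/(2-\alpha)},\\[2mm] \exp\Big\{-x^\alpha\Big(1-\dfrac{u}{2x^{2-\alpha}}\Big)\Big\}+\dfrac{C_n}{x^2}\exp\{-x^\alpha\} & \text{if } x\ge u^{1/(2-\alpha)}. \end{cases}$$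
   Context: $x^+=\max\{x,0\}$. *)

theory Defs
  imports "HOL-Probability.Probability"
begin

definition pos_part :: "real \<Rightarrow> real" where
  "pos_part x = max x 0"

definition partial_sum :: "(nat \<Rightarrow> 'a \<Rightarrow> real) \<Rightarrow> nat \<Rightarrow> 'a \<Rightarrow> real" where
  "partial_sum \<xi> k \<omega> = (\<Sum>i = 1..k. \<xi> i \<omega>)"

definition wt :: "real \<Rightarrow> real \<Rightarrow> real" where
  "wt \<alpha> y = y\<^sup>2 * exp (pos_part y powr \<alpha>)"

definition Upsilon ::
  "'a measure \<Rightarrow> (nat \<Rightarrow> 'a measure) \<Rightarrow> (nat \<Rightarrow> 'a \<Rightarrow> real) \<Rightarrow> real \<Rightarrow> nat \<Rightarrow> 'a \<Rightarrow> real" where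
  "Upsilon M F \<xi> \<alpha> k \<omega> =
     (\<Sum>i = 1..k. real_cond_exp M (F (i - 1)) (\<lambda>w. wt \<alpha> (\<xi> i w)) \<omega>)"

end

theory Submission
  imports Defs
begin

lemma case1:
  fixes a x u C :: real
  assumes a: "0 < a" "a < 1" and x: "0 < x" and u: "0 < u"
  defines "y \<equiv> (u/x) powr (1/(1-a))"
  shows "0 < y" "x/u \<le> y powr (a - 1)"
    "- (x/u * x) + (x/u)\<^sup>2/2 * u = - (x\<^sup>2 / (2 * u))"
    "C / wt a y = C * (x / u) powr (2 / (1 - a)) * exp (- ((u / x) powr (a / (1 - a))))"
proof -
  show y0: "0 < y" unfolding y_def using x u by simp
  have "y powr (a - 1) = (u/x) powr (1/(1-a) * (a - 1))" unfolding y_def by (simp add: powr_powr)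
  also have "1/(1-a) * (a - 1) = -1" using a by (simp add: field_simps)
  also have "(u/x) powr (-1) = x/u" using x u by (simp add: powr_minus)
  finally show "x/u \<le> y powr (a - 1)" by simp
  show "- (x/u * x) + (x/u)\<^sup>2/2 * u = - (x\<^sup>2 / (2 * u))" using u by (simp add: field_simps power2_eq_square)
  have y2: "y\<^sup>2 = (u/x) powr (2/(1-a))"
  proof -
    have "y\<^sup>2 = y powr 2" using y0 by (simp add: powr_realpow)
    also have "\<dots> = (u/x) powr (1/(1-a) * 2)" unfolding y_def by (simp add: powr_powr)
    finally show ?thesis by simp
  qed
  have ya: "y powr a = (u/x) powr (a/(1-a))" unfolding y_def by (simp add: powr_powr)
  have inv: "(x/u) powr (2/(1-a)) * (u/x) powr (2/(1-a)) = 1"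
    using x u by (simp add: powr_mult[symmetric])
  have "wt a y = (u/x) powr (2/(1-a)) * exp ((u/x) powr (a/(1-a)))"
    unfolding wt_def pos_part_def using y0 y2 ya by simp
  then show "C / wt a y = C * (x / u) powr (2 / (1 - a)) * exp (- ((u / x) powr (a / (1 - a))))"
    using inv x u by (simp add: exp_minus field_simps)
qed

lemma case2:
  fixes a x u C :: real
  assumes a: "0 < a" "a < 1" and x: "0 < x" and u: "0 < u"
  shows "- (x powr (a - 1) * x) + (x powr (a - 1))\<^sup>2/2 * u = - (x powr a * (1 - u / (2 * x powr (2 - a))))"
    "C / wt a x = C / x\<^sup>2 * exp (- (x powr a))"
proof -
  have e1: "x powr (a - 1) * x = x powr a" using x powr_mult_base[of x "a - 1"] by (simp add: mult.commute)
  have e2: "(x powr (a - 1))\<^sup>2 = x powr (2*a - 2)" using x by (simp add: power2_eq_square powr_add[symmetric])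
  have e3: "x powr a / x powr (2 - a) = x powr (2*a - 2)" using x by (simp add: powr_diff[symmetric])
  have "- (x powr a * (1 - u / (2 * x powr (2 - a)))) = - (x powr a) + (x powr a / x powr (2 - a)) * u / 2"
    by (simp add: field_simps)
  then show "- (x powr (a - 1) * x) + (x powr (a - 1))\<^sup>2/2 * u = - (x powr a * (1 - u / (2 * x powr (2 - a))))"
    using e1 e2 e3 by simp
  show "C / wt a x = C / x\<^sup>2 * exp (- (x powr a))"
    using x by (simp add: wt_def pos_part_def exp_minus field_simps)
qed

lemma exp_quad_neg: fixes s::real assumes "s \<le> 0" shows "exp s \<le> 1 + s + s\<^sup>2/2"
proof (cases "s = 0")
  case True then show ?thesis by simp
next
  case False
  then have "s < 0" using assms by simp
  from Maclaurin_minus[OF this, of 2 "\<lambda>n. exp" exp]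
  obtain t where t: "s < t" "t < 0" "exp s = (\<Sum>m<2. exp 0 / fact m * s ^ m) + exp t / fact 2 * s ^ 2"
    by auto
  have "exp t \<le> 1" using t by simp
  then have "exp t / fact 2 * s ^ 2 \<le> s^2/2" by (simp add: mult_left_le_one_le)
  moreover have "(\<Sum>m<2. exp 0 / fact m * s ^ m) = 1 + s" by (simp add: numeral_2_eq_2)
  ultimately show ?thesis using t by simp
qed
lemma exp_quad_pos: fixes s::real assumes "0 \<le> s" shows "exp s \<le> 1 + s + s\<^sup>2/2 * exp s"
proof -
  obtain t where t: "\<bar>t\<bar> \<le> \<bar>s\<bar>" "exp s = (\<Sum>m<2. (s ^ m) / fact m) + (exp t / fact 2) * s ^ 2"
    using Maclaurin_exp_le[of s 2] by blast
  have "exp t \<le> exp s" using t(1) assms by (simp del: exp_le_cancel_iff add: exp_le_cancel_iff abs_le_iff)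
  then have "exp t / fact 2 * s ^ 2 \<le> s^2/2 * exp s" by (simp add: mult_right_mono mult.commute)
  moreover have "(\<Sum>m<2. (s ^ m) / fact m) = 1 + s" by (simp add: numeral_2_eq_2)
  ultimately show ?thesis using t by simp
qed
lemma wt_nonneg: "0 \<le> wt a t" by (simp add: wt_def)
lemma wt_zero: "wt a 0 = 0" by (simp add: wt_def)
lemma wt_mono: assumes "0 < y" "y \<le> t" "0 \<le> a" shows "wt a y \<le> wt a t"
proof -
  have "y\<^sup>2 \<le> t\<^sup>2" using assms by (simp add: power_mono)
  moreover have "y powr a \<le> t powr a" using assms by (simp add: powr_mono2)
  ultimately show ?thesis using assms by (simp add: wt_def pos_part_def mult_mono)
qed

lemma key_ineq:
  fixes a y l t :: real
  assumes a: "0 < a" "a < 1" and y: "0 < y" and l: "0 < l" "l \<le> y powr (a - 1)" and t: "t \<le> y"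
  shows "exp (l * t) \<le> 1 + l * t + l\<^sup>2 / 2 * wt a t"
proof (cases "t \<le> 0")
  case True
  then have "l * t \<le> 0" using l by (simp add: mult_nonneg_nonpos)
  then have "exp (l*t) \<le> 1 + l*t + (l*t)\<^sup>2/2" by (rule exp_quad_neg)
  also have "(l*t)\<^sup>2/2 \<le> l\<^sup>2/2 * wt a t"
    unfolding wt_def by (simp add: power_mult_distrib mult_le_cancel_left1 mult_left_mono)
  finally show ?thesis by simp
next
  case False
  then have tp: "0 < t" by simp
  have "l \<le> t powr (a - 1)" using l(2) powr_mono2'[of "a-1" t y] a tp t by simp
  then have "l * t \<le> t powr (a - 1) * t" using tp by simp
  also have "\<dots> = t powr a" using tp powr_mult_base[of t "a - 1"] by (simp add: mult.commute)
  finally have lt: "l * t \<le> t powr a" .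
  have "exp (l*t) \<le> 1 + l*t + (l*t)\<^sup>2/2 * exp (l*t)" using tp l by (intro exp_quad_pos) simp
  also have "(l*t)\<^sup>2/2 * exp (l*t) \<le> (l*t)\<^sup>2/2 * exp (t powr a)" using lt by (intro mult_left_mono) auto
  also have "\<dots> = l\<^sup>2 / 2 * wt a t" using tp by (simp add: wt_def pos_part_def power_mult_distrib)
  finally show ?thesis by simp
qed


locale mset =
  fixes M :: "'a measure" and F :: "nat \<Rightarrow> 'a measure"
    and \<xi> :: "nat \<Rightarrow> 'a \<Rightarrow> real" and n :: nat and \<alpha> :: real
  assumes prob: "prob_space M"
    and n1: "n \<ge> 1"
    and sub: "\<And>i. i \<le> n \<Longrightarrow> subalgebra M (F i)"
    and mono: "\<And>i j. i \<le> j \<Longrightarrow> j \<le> n \<Longrightarrow> sets (F i) \<subseteq> sets (F j)"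
    and adapted: "\<And>i. i \<le> n \<Longrightarrow> \<xi> i \<in> borel_measurable (F i)"
    and integ: "\<And>i. i \<le> n \<Longrightarrow> integrable M (\<xi> i)"
    and mart: "\<And>i. 1 \<le> i \<Longrightarrow> i \<le> n \<Longrightarrow>
                 AE \<omega> in M. real_cond_exp M (F (i - 1)) (\<xi> i) \<omega> = 0"
    and alpha: "0 < \<alpha>" "\<alpha> < 1"
    and Cn_fin: "\<And>i. 1 \<le> i \<Longrightarrow> i \<le> n \<Longrightarrow> integrable M (\<lambda>\<omega>. wt \<alpha> (\<xi> i \<omega>))"
begin

interpretation P: prob_space M by (rule prob)

lemma sfs: "i \<le> n \<Longrightarrow> sigma_finite_subalgebra M (F i)"
  by (intro finite_measure_subalgebra_is_sigma_finite)
     (simp add: finite_measure_subalgebra_def finite_measure_subalgebra_axioms_def sub P.finite_measure_axioms)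

lemma lift: assumes "i \<le> k" "k \<le> n" "f \<in> borel_measurable (F i)" shows "f \<in> borel_measurable (F k)"
proof -
  have "subalgebra (F k) (F i)" using sub[of i] sub[of k] mono[of i k] assms
    by (auto simp: subalgebra_def)
  then show ?thesis using measurable_from_subalg assms(3) by blast
qed

lemma toM: assumes "k \<le> n" "f \<in> borel_measurable (F k)" shows "f \<in> borel_measurable M"
  using measurable_from_subalg[OF sub[OF assms(1)] assms(2)] .

lemma meas_wt [measurable]: assumes [measurable]: "f \<in> borel_measurable N" shows "(\<lambda>w. wt a (f w)) \<in> borel_measurable N"
  unfolding wt_def pos_part_def by measurable

definition "\<eta> y i \<omega> = (if \<xi> i \<omega> \<le> y then \<xi> i \<omega> else 0)"
definition "v i \<omega> = max 0 (real_cond_exp M (F (i-1)) (\<lambda>w. wt \<alpha> (\<xi> i w)) \<omega>)"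
definition "Y y k \<omega> = (\<Sum>i=1..k. \<eta> y i \<omega>)"
definition "U k \<omega> = (\<Sum>i=1..k. v i \<omega>)"
definition "Z y l k \<omega> = exp (l * Y y k \<omega> - l\<^sup>2/2 * U k \<omega>)"

lemma eta_meas: "i \<le> n \<Longrightarrow> \<eta> y i \<in> borel_measurable (F i)"
proof -
  assume "i \<le> n"
  then have [measurable]: "\<xi> i \<in> borel_measurable (F i)" by (rule adapted)
  show ?thesis unfolding \<eta>_def[abs_def] by measurable
qed

lemma v_meas: "v i \<in> borel_measurable (F (i - 1))"
  unfolding v_def[abs_def] by measurable

lemma Y_meas: "k \<le> n \<Longrightarrow> Y y k \<in> borel_measurable (F k)"
  unfolding Y_def[abs_def]
  by (intro borel_measurable_sum lift[OF _ _ eta_meas]) auto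

lemma U_meas: "k \<le> n \<Longrightarrow> U k \<in> borel_measurable (F k)"
  unfolding U_def[abs_def]
  by (intro borel_measurable_sum lift[OF _ _ v_meas]) auto

lemma Z_meas: "k \<le> n \<Longrightarrow> Z y l k \<in> borel_measurable (F k)"
proof -
  assume k: "k \<le> n"
  note [measurable] = Y_meas[OF k] U_meas[OF k]
  show ?thesis unfolding Z_def[abs_def] by measurable
qed

lemma eta_le: "0 < y \<Longrightarrow> \<eta> y i \<omega> \<le> y" by (simp add: \<eta>_def)
lemma eta_le_xi: "0 < y \<Longrightarrow> \<eta> y i \<omega> \<le> \<xi> i \<omega>" by (simp add: \<eta>_def)
lemma wt_eta: "0 < y \<Longrightarrow> wt \<alpha> (\<eta> y i \<omega>) \<le> wt \<alpha> (\<xi> i \<omega>)"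
  by (simp add: \<eta>_def wt_zero wt_nonneg)
lemma v_nonneg: "0 \<le> v i \<omega>" by (simp add: v_def)
lemma U_nonneg: "0 \<le> U k \<omega>" by (simp add: U_def v_nonneg sum_nonneg)
lemma Y_le: "0 < y \<Longrightarrow> Y y k \<omega> \<le> k * y"
proof -
  assume y: "0 < y"
  have "Y y k \<omega> \<le> (\<Sum>i=1..k. y)" unfolding Y_def by (intro sum_mono eta_le y)
  then show ?thesis by simp
qed
lemma Z_pos: "0 < Z y l k \<omega>" by (simp add: Z_def)
lemma Z_le: assumes "0 < y" "0 < l" shows "Z y l k \<omega> \<le> exp (l * (k * y))"
proof -
  have "l * Y y k \<omega> \<le> l * (k * y)" using Y_le[OF assms(1)] assms by (simp add: mult_left_mono)
  moreover have "0 \<le> l\<^sup>2/2 * U k \<omega>" by (simp add: U_nonneg)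
  ultimately show ?thesis unfolding Z_def by simp
qed
lemma Z_Suc: "Z y l (Suc k) \<omega> = Z y l k \<omega> * exp (- (l\<^sup>2/2 * v (Suc k) \<omega>)) * exp (l * \<eta> y (Suc k) \<omega>)"
  unfolding Z_def Y_def U_def by (simp add: exp_add[symmetric] exp_diff algebra_simps)

lemma step:
  assumes i: "1 \<le> i" "i \<le> n" and Wm: "W \<in> borel_measurable (F (i-1))"
    and W: "\<And>\<omega>. \<omega> \<in> space M \<Longrightarrow> 0 \<le> W \<omega> \<and> W \<omega> \<le> K"
    and y: "0 < y" and l: "0 < l" "l \<le> y powr (\<alpha> - 1)"
  shows "(\<integral>\<omega>. W \<omega> * exp (l * \<eta> y i \<omega>) \<partial>M) \<le> (\<integral>\<omega>. W \<omega> * (1 + l\<^sup>2/2 * v i \<omega>) \<partial>M)"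
proof -
  interpret S: sigma_finite_subalgebra M "F (i-1)" using sfs i by simp
  have im1: "i - 1 \<le> n" using i by simp
  have [measurable]: "W \<in> borel_measurable M" using toM[OF im1 Wm] .
  have [measurable]: "\<xi> i \<in> borel_measurable M" using toM[OF i(2) adapted[OF i(2)]] .
  have [measurable]: "\<eta> y i \<in> borel_measurable M" using toM[OF i(2) eta_meas[OF i(2)]] .
  have [measurable]: "v i \<in> borel_measurable M" using toM[OF im1 v_meas] .
  define g where "g = (\<lambda>\<omega>. wt \<alpha> (\<xi> i \<omega>))"
  have [measurable]: "g \<in> borel_measurable M" unfolding g_def by measurable
  have gi: "integrable M g" unfolding g_def using Cn_fin i by simp
  have Wa: "\<And>\<omega>. \<omega> \<in> space M \<Longrightarrow> \<bar>W \<omega>\<bar> \<le> \<bar>K\<bar>" using W by fastforce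
  have I1: "integrable M (\<lambda>\<omega>. W \<omega> * \<xi> i \<omega>)"
  proof (rule Bochner_Integration.integrable_bound[where f="\<lambda>\<omega>. K * \<xi> i \<omega>"])
    show "integrable M (\<lambda>\<omega>. K * \<xi> i \<omega>)" using integ[OF i(2)] by simp
    show "AE \<omega> in M. norm (W \<omega> * \<xi> i \<omega>) \<le> norm (K * \<xi> i \<omega>)"
      using Wa by (auto simp: abs_mult intro!: mult_right_mono)
  qed measurable
  have I2: "integrable M (\<lambda>\<omega>. W \<omega> * g \<omega>)"
  proof (rule Bochner_Integration.integrable_bound[where f="\<lambda>\<omega>. K * g \<omega>"])
    show "integrable M (\<lambda>\<omega>. K * g \<omega>)" using gi by simp
    show "AE \<omega> in M. norm (W \<omega> * g \<omega>) \<le> norm (K * g \<omega>)"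
      using Wa by (auto simp: abs_mult intro!: mult_right_mono)
  qed measurable
  have I3: "integrable M W"
    by (rule P.integrable_const_bound[where B="\<bar>K\<bar>"]) (use Wa in auto)
  have I4: "integrable M (\<lambda>\<omega>. W \<omega> * exp (l * \<eta> y i \<omega>))"
  proof (rule P.integrable_const_bound[where B="\<bar>K\<bar> * exp (l * y)"])
    show "AE \<omega> in M. norm (W \<omega> * exp (l * \<eta> y i \<omega>)) \<le> \<bar>K\<bar> * exp (l * y)"
    proof (rule AE_I2)
      fix \<omega> assume om: "\<omega> \<in> space M"
      have "exp (l * \<eta> y i \<omega>) \<le> exp (l * y)" using eta_le[OF y] l by (simp add: mult_left_mono)
      then show "norm (W \<omega> * exp (l * \<eta> y i \<omega>)) \<le> \<bar>K\<bar> * exp (l * y)"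
        using Wa[OF om] by (auto simp: abs_mult intro!: mult_mono)
    qed
  qed measurable
  have R1: "(\<integral>\<omega>. W \<omega> * \<xi> i \<omega> \<partial>M) = 0"
  proof -
    have "(\<integral>\<omega>. W \<omega> * \<xi> i \<omega> \<partial>M) = (\<integral>\<omega>. W \<omega> * real_cond_exp M (F (i-1)) (\<xi> i) \<omega> \<partial>M)"
      by (rule S.real_cond_exp_intg(2)[symmetric]) (use I1 Wm in auto)
    also have "\<dots> = (\<integral>\<omega>. 0 \<partial>M)"
      by (rule integral_cong_AE) (use mart[OF i] in auto)
    finally show ?thesis by simp
  qed
  have I5: "integrable M (\<lambda>\<omega>. W \<omega> * real_cond_exp M (F (i-1)) g \<omega>)"
    by (rule S.real_cond_exp_intg(1)) (use I2 Wm in auto)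
  have I6: "integrable M (\<lambda>\<omega>. W \<omega> * v i \<omega>)"
  proof (rule Bochner_Integration.integrable_bound[OF I5])
    show "AE \<omega> in M. norm (W \<omega> * v i \<omega>) \<le> norm (W \<omega> * real_cond_exp M (F (i-1)) g \<omega>)"
      using W by (auto simp: abs_mult v_def g_def intro!: mult_left_mono)
  qed measurable
  have R2: "(\<integral>\<omega>. W \<omega> * g \<omega> \<partial>M) \<le> (\<integral>\<omega>. W \<omega> * v i \<omega> \<partial>M)"
  proof -
    have "(\<integral>\<omega>. W \<omega> * g \<omega> \<partial>M) = (\<integral>\<omega>. W \<omega> * real_cond_exp M (F (i-1)) g \<omega> \<partial>M)"
      by (rule S.real_cond_exp_intg(2)[symmetric]) (use I2 Wm in auto)
    also have "\<dots> \<le> (\<integral>\<omega>. W \<omega> * v i \<omega> \<partial>M)"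
      by (rule integral_mono[OF I5 I6]) (use W in \<open>auto simp: v_def g_def intro!: mult_left_mono\<close>)
    finally show ?thesis .
  qed
  have "(\<integral>\<omega>. W \<omega> * exp (l * \<eta> y i \<omega>) \<partial>M)
      \<le> (\<integral>\<omega>. W \<omega> + l * (W \<omega> * \<xi> i \<omega>) + l\<^sup>2/2 * (W \<omega> * g \<omega>) \<partial>M)"
  proof (rule integral_mono[OF I4])
    show "integrable M (\<lambda>\<omega>. W \<omega> + l * (W \<omega> * \<xi> i \<omega>) + l\<^sup>2/2 * (W \<omega> * g \<omega>))"
      using I1 I2 I3 by auto
    fix \<omega> assume om: "\<omega> \<in> space M"
    have "exp (l * \<eta> y i \<omega>) \<le> 1 + l * \<eta> y i \<omega> + l\<^sup>2 / 2 * wt \<alpha> (\<eta> y i \<omega>)"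
      by (rule key_ineq[OF alpha y l eta_le[OF y]])
    also have "\<dots> \<le> 1 + l * \<xi> i \<omega> + l\<^sup>2 / 2 * g \<omega>"
      using eta_le_xi[OF y, of i \<omega>] wt_eta[OF y, of i \<omega>] l unfolding g_def
      by (intro add_mono mult_left_mono) auto
    finally have "W \<omega> * exp (l * \<eta> y i \<omega>) \<le> W \<omega> * (1 + l * \<xi> i \<omega> + l\<^sup>2 / 2 * g \<omega>)"
      using W[OF om] by (intro mult_left_mono) auto
    then show "W \<omega> * exp (l * \<eta> y i \<omega>) \<le> W \<omega> + l * (W \<omega> * \<xi> i \<omega>) + l\<^sup>2/2 * (W \<omega> * g \<omega>)"
      by (simp add: algebra_simps)
  qed
  also have "\<dots> = (\<integral>\<omega>. W \<omega> \<partial>M) + l * (\<integral>\<omega>. W \<omega> * \<xi> i \<omega> \<partial>M) + l\<^sup>2/2 * (\<integral>\<omega>. W \<omega> * g \<omega> \<partial>M)"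
    using I1 I2 I3 by simp
  also have "\<dots> \<le> (\<integral>\<omega>. W \<omega> \<partial>M) + l\<^sup>2/2 * (\<integral>\<omega>. W \<omega> * v i \<omega> \<partial>M)"
    using R1 R2 by (simp add: mult_left_mono)
  also have "\<dots> = (\<integral>\<omega>. W \<omega> + l\<^sup>2/2 * (W \<omega> * v i \<omega>) \<partial>M)"
    using I3 I6 by simp
  also have "\<dots> = (\<integral>\<omega>. W \<omega> * (1 + l\<^sup>2/2 * v i \<omega>) \<partial>M)"
    by (simp add: algebra_simps)
  finally show ?thesis .
qed

lemma Z_intg: assumes "k \<le> n" "0 < y" "0 < l" "G \<in> borel_measurable M"
   "\<And>\<omega>. \<omega> \<in> space M \<Longrightarrow> 0 \<le> G \<omega> \<and> G \<omega> \<le> 1"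
  shows "integrable M (\<lambda>\<omega>. Z y l k \<omega> * G \<omega>)"
proof (rule P.integrable_const_bound[where B="exp (l * (k * y))"])
  have [measurable]: "Z y l k \<in> borel_measurable M" using toM[OF assms(1) Z_meas[OF assms(1)]] .
  note [measurable] = assms(4)
  show "(\<lambda>\<omega>. Z y l k \<omega> * G \<omega>) \<in> borel_measurable M" by measurable
  show "AE \<omega> in M. norm (Z y l k \<omega> * G \<omega>) \<le> exp (l * (k * y))"
  proof (rule AE_I2)
    fix \<omega> assume om: "\<omega> \<in> space M"
    have "Z y l k \<omega> * G \<omega> \<le> exp (l * (k * y)) * 1"
      using Z_le[OF assms(2,3), of k \<omega>] Z_pos[of y l k \<omega>] assms(5)[OF om] by (intro mult_mono) auto
    then show "norm (Z y l k \<omega> * G \<omega>) \<le> exp (l * (k * y))"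
      using Z_pos[of y l k \<omega>] assms(5)[OF om] by (simp add: abs_mult)
  qed
qed

lemma super:
  assumes k: "k < n" and Gm: "G \<in> borel_measurable (F k)"
    and G: "\<And>\<omega>. \<omega> \<in> space M \<Longrightarrow> 0 \<le> G \<omega> \<and> G \<omega> \<le> 1"
    and y: "0 < y" and l: "0 < l" "l \<le> y powr (\<alpha> - 1)"
  shows "(\<integral>\<omega>. Z y l (Suc k) \<omega> * G \<omega> \<partial>M) \<le> (\<integral>\<omega>. Z y l k \<omega> * G \<omega> \<partial>M)"
proof -
  define W where "W \<omega> = Z y l k \<omega> * G \<omega> * exp (- (l\<^sup>2/2 * v (Suc k) \<omega>))" for \<omega>
  have kn: "k \<le> n" using k by simp
  have Wm: "W \<in> borel_measurable (F (Suc k - 1))"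
  proof -
    note [measurable] = Z_meas[OF kn] Gm
    have [measurable]: "v (Suc k) \<in> borel_measurable (F k)" using v_meas[of "Suc k"] by simp
    show ?thesis unfolding W_def[abs_def] by simp measurable
  qed
  have Wb: "0 \<le> W \<omega> \<and> W \<omega> \<le> exp (l * (k * y))" if om: "\<omega> \<in> space M" for \<omega>
  proof -
    have e: "exp (- (l\<^sup>2/2 * v (Suc k) \<omega>)) \<le> 1" using v_nonneg[of "Suc k" \<omega>] by simp
    have "W \<omega> \<le> exp (l * (k * y)) * 1 * 1" unfolding W_def
      using Z_le[OF y l(1), of k \<omega>] Z_pos[of y l k \<omega>] G[OF om] e
      by (intro mult_mono) auto
    moreover have "0 \<le> W \<omega>" unfolding W_def using Z_pos[of y l k \<omega>] G[OF om] by simp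
    ultimately show ?thesis by simp
  qed
  have "(\<integral>\<omega>. Z y l (Suc k) \<omega> * G \<omega> \<partial>M) = (\<integral>\<omega>. W \<omega> * exp (l * \<eta> y (Suc k) \<omega>) \<partial>M)"
    unfolding W_def Z_Suc by (simp add: algebra_simps)
  also have "\<dots> \<le> (\<integral>\<omega>. W \<omega> * (1 + l\<^sup>2/2 * v (Suc k) \<omega>) \<partial>M)"
    by (rule step[OF _ _ Wm Wb y l]) (use k in auto)
  also have "\<dots> \<le> (\<integral>\<omega>. Z y l k \<omega> * G \<omega> \<partial>M)"
  proof (rule integral_mono')
    show "integrable M (\<lambda>\<omega>. Z y l k \<omega> * G \<omega>)"
      by (rule Z_intg[OF kn y l(1) toM[OF kn Gm] G])
    fix \<omega> assume om: "\<omega> \<in> space M"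
    show "0 \<le> Z y l k \<omega> * G \<omega>" using Z_pos[of y l k \<omega>] G[OF om] by simp
    define s where "s = l\<^sup>2/2 * v (Suc k) \<omega>"
    have "1 + s \<le> exp s" by simp
    then have "exp (- s) * (1 + s) \<le> 1" by (simp add: exp_minus field_simps)
    then have "Z y l k \<omega> * G \<omega> * (exp (- s) * (1 + s)) \<le> Z y l k \<omega> * G \<omega> * 1"
      using Z_pos[of y l k \<omega>] G[OF om] by (intro mult_left_mono) auto
    then show "W \<omega> * (1 + l\<^sup>2/2 * v (Suc k) \<omega>) \<le> Z y l k \<omega> * G \<omega>"
      unfolding W_def s_def by (simp add: algebra_simps)
  qed
  finally show ?thesis .
qed

definition "H y x u k \<omega> = (x \<le> Y y k \<omega> \<and> U k \<omega> \<le> u)"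
definition "B y x u k = {\<omega> \<in> space M. \<forall>j\<in>{1..<k}. \<not> H y x u j \<omega>}"
definition "A y x u k = B y x u k \<inter> {\<omega>. H y x u k \<omega>}"

lemma spF: "k \<le> n \<Longrightarrow> space (F k) = space M" using sub by (auto simp: subalgebra_def)

lemma H_pred: assumes "j \<le> k" "k \<le> n" shows "Measurable.pred (F k) (H y x u j)"
proof -
  have [measurable]: "Y y j \<in> borel_measurable (F k)" using lift[OF assms Y_meas] assms by simp
  have [measurable]: "U j \<in> borel_measurable (F k)" using lift[OF assms U_meas] assms by simp
  show ?thesis unfolding H_def[abs_def] by measurable
qed

lemma B_sets: assumes "k \<le> n" shows "B y x u (Suc k) \<in> sets (F k)"
proof -
  have "B y x u (Suc k) = {\<omega> \<in> space (F k). \<forall>j\<in>{1..<Suc k}. \<not> H y x u j \<omega>}"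
    unfolding B_def using spF[OF assms] by simp
  also have "\<dots> \<in> sets (F k)"
    by (rule predE, rule pred_intros_finite(3)) (use H_pred assms in \<open>auto intro!: pred_intros_logic(2)\<close>)
  finally show ?thesis .
qed

lemma A_sets: assumes "1 \<le> k" "k \<le> n" shows "A y x u k \<in> sets (F k)"
proof -
  have "B y x u (Suc (k-1)) \<in> sets (F (k-1))" using B_sets[of "k-1"] assms by simp
  then have "B y x u k \<in> sets (F (k-1))" using assms by simp
  then have b: "B y x u k \<in> sets (F k)" using mono[of "k-1" k] assms by auto
  have h: "{\<omega> \<in> space (F k). H y x u k \<omega>} \<in> sets (F k)" using H_pred[of k k] assms by (intro predE) auto
  have "A y x u k = B y x u k \<inter> {\<omega> \<in> space (F k). H y x u k \<omega>}"
    unfolding A_def B_def using spF assms by auto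
  then show ?thesis using b h by auto
qed

lemma A_setsM: "1 \<le> k \<Longrightarrow> k \<le> n \<Longrightarrow> A y x u k \<in> sets M"
  using A_sets[of k y x u] sub[of k] by (auto simp: subalgebra_def)
lemma B_setsM: "k \<le> n \<Longrightarrow> B y x u (Suc k) \<in> sets M"
  using B_sets[of k y x u] sub[of k] by (auto simp: subalgebra_def)

lemma B_split: assumes "1 \<le> m"
  shows "indicator (B y x u m) \<omega> = (indicator (A y x u m) \<omega> + indicator (B y x u (Suc m)) \<omega> :: real)"
proof -
  have e: "{1..<Suc m} = insert m {1..<m}" using assms by auto
  show ?thesis unfolding A_def B_def e by (auto simp: indicator_def)
qed

lemma tele:
  assumes y: "0 < y" and l: "0 < l" "l \<le> y powr (\<alpha> - 1)" and m: "1 \<le> m" "m \<le> n"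
  shows "(\<Sum>k=m..n. (\<integral>\<omega>. Z y l k \<omega> * indicator (A y x u k) \<omega> \<partial>M))
          \<le> (\<integral>\<omega>. Z y l m \<omega> * indicator (B y x u m) \<omega> \<partial>M)"
  using m(2,1)
proof (induction m rule: inc_induct)
  case base
  have Bs: "B y x u n \<in> sets M" using B_setsM[of "n-1"] n1 by simp
  have As: "A y x u n \<in> sets M" using A_setsM n1 by simp
  show ?case
  proof (simp, rule integral_mono)
    show "integrable M (\<lambda>\<omega>. Z y l n \<omega> * indicator (A y x u n) \<omega>)"
      by (rule Z_intg) (use y l As in auto)
    show "integrable M (\<lambda>\<omega>. Z y l n \<omega> * indicator (B y x u n) \<omega>)"
      by (rule Z_intg) (use y l Bs in auto)
    fix \<omega> show "Z y l n \<omega> * indicator (A y x u n) \<omega> \<le> Z y l n \<omega> * indicator (B y x u n) \<omega>"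
      using Z_pos[of y l n \<omega>] by (auto simp: A_def indicator_def)
  qed
next
  case (step m)
  have As: "A y x u m \<in> sets M" using A_setsM step by simp
  have Bs: "B y x u (Suc m) \<in> sets M" using B_setsM step by simp
  have i1: "integrable M (\<lambda>\<omega>. Z y l m \<omega> * indicator (A y x u m) \<omega>)"
    by (rule Z_intg) (use y l As step in auto)
  have i2: "integrable M (\<lambda>\<omega>. Z y l m \<omega> * indicator (B y x u (Suc m)) \<omega>)"
    by (rule Z_intg) (use y l Bs step in auto)
  have "(\<Sum>k=m..n. (\<integral>\<omega>. Z y l k \<omega> * indicator (A y x u k) \<omega> \<partial>M))
      = (\<integral>\<omega>. Z y l m \<omega> * indicator (A y x u m) \<omega> \<partial>M)
        + (\<Sum>k=Suc m..n. (\<integral>\<omega>. Z y l k \<omega> * indicator (A y x u k) \<omega> \<partial>M))"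
    using step by (simp add: sum.atLeast_Suc_atMost)
  also have "\<dots> \<le> (\<integral>\<omega>. Z y l m \<omega> * indicator (A y x u m) \<omega> \<partial>M)
        + (\<integral>\<omega>. Z y l (Suc m) \<omega> * indicator (B y x u (Suc m)) \<omega> \<partial>M)"
    using step by simp
  also have "\<dots> \<le> (\<integral>\<omega>. Z y l m \<omega> * indicator (A y x u m) \<omega> \<partial>M)
        + (\<integral>\<omega>. Z y l m \<omega> * indicator (B y x u (Suc m)) \<omega> \<partial>M)"
  proof -
    have "(\<integral>\<omega>. Z y l (Suc m) \<omega> * indicator (B y x u (Suc m)) \<omega> \<partial>M)
        \<le> (\<integral>\<omega>. Z y l m \<omega> * indicator (B y x u (Suc m)) \<omega> \<partial>M)"
    proof (rule super[OF _ _ _ y l])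
      show "m < n" using step by simp
      have "B y x u (Suc m) \<in> sets (F m)" using B_sets step by simp
      then show "indicator (B y x u (Suc m)) \<in> borel_measurable (F m)" by simp
    qed (auto simp: indicator_def)
    then show ?thesis by simp
  qed
  also have "\<dots> = (\<integral>\<omega>. Z y l m \<omega> * indicator (A y x u m) \<omega> + Z y l m \<omega> * indicator (B y x u (Suc m)) \<omega> \<partial>M)"
    using i1 i2 by simp
  also have "\<dots> = (\<integral>\<omega>. Z y l m \<omega> * indicator (B y x u m) \<omega> \<partial>M)"
    using B_split[OF step(4), of y x u] by (simp add: distrib_left)
  finally show ?case .
qed

lemma hit:
  assumes y: "0 < y" and l: "0 < l" "l \<le> y powr (\<alpha> - 1)"
  shows "measure M (\<Union>k\<in>{1..n}. A y x u k) \<le> exp (- (l * x) + l\<^sup>2/2 * u)"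
proof -
  define c where "c = exp (l * x - l\<^sup>2/2 * u)"
  have c0: "0 < c" unfolding c_def by simp
  have mA: "c * measure M (A y x u k) \<le> (\<integral>\<omega>. Z y l k \<omega> * indicator (A y x u k) \<omega> \<partial>M)"
    if k: "k \<in> {1..n}" for k
  proof -
    have As: "A y x u k \<in> sets M" using A_setsM k by simp
    have "c * measure M (A y x u k) = (\<integral>\<omega>. c * indicator (A y x u k) \<omega> \<partial>M)"
      using As by (simp add: Int_absorb2 sets.sets_into_space)
    also have "\<dots> \<le> (\<integral>\<omega>. Z y l k \<omega> * indicator (A y x u k) \<omega> \<partial>M)"
    proof (rule integral_mono)
      show "integrable M (\<lambda>\<omega>. c * indicator (A y x u k) \<omega>)" using As P.emeasure_finite by (simp add: integrable_indicator_iff less_top[symmetric])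
      show "integrable M (\<lambda>\<omega>. Z y l k \<omega> * indicator (A y x u k) \<omega>)"
        by (rule Z_intg) (use y l As k in auto)
      fix \<omega>
      show "c * indicator (A y x u k) \<omega> \<le> Z y l k \<omega> * indicator (A y x u k) \<omega>"
      proof (cases "\<omega> \<in> A y x u k")
        case True
        then have "x \<le> Y y k \<omega>" "U k \<omega> \<le> u" by (auto simp: A_def H_def)
        then have "l * x - l\<^sup>2/2 * u \<le> l * Y y k \<omega> - l\<^sup>2/2 * U k \<omega>"
          using l by (intro diff_mono mult_left_mono) auto
        then show ?thesis using True by (simp add: c_def Z_def)
      qed simp
    qed
    finally show ?thesis .
  qed
  have "measure M (\<Union>k\<in>{1..n}. A y x u k) \<le> (\<Sum>k=1..n. measure M (A y x u k))"
    by (rule measure_UNION_le) (auto intro: A_setsM)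
  also have "\<dots> = (\<Sum>k=1..n. c * measure M (A y x u k)) / c" using c0 by (simp add: sum_distrib_left[symmetric])
  also have "\<dots> \<le> (\<Sum>k=1..n. (\<integral>\<omega>. Z y l k \<omega> * indicator (A y x u k) \<omega> \<partial>M)) / c"
    using c0 mA by (intro divide_right_mono sum_mono) auto
  also have "\<dots> \<le> (\<integral>\<omega>. Z y l 1 \<omega> * indicator (B y x u 1) \<omega> \<partial>M) / c"
    using c0 tele[OF y l _ n1] by (intro divide_right_mono) auto
  also have "\<dots> \<le> 1 / c"
  proof (intro divide_right_mono)
    have e1: "(\<integral>\<omega>. Z y l 1 \<omega> * indicator (B y x u 1) \<omega> \<partial>M) = (\<integral>\<omega>. Z y l (Suc 0) \<omega> * 1 \<partial>M)"
      unfolding One_nat_def by (rule Bochner_Integration.integral_cong) (auto simp: B_def)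
    have e2: "(\<integral>\<omega>. Z y l (Suc 0) \<omega> * 1 \<partial>M) \<le> (\<integral>\<omega>. Z y l 0 \<omega> * 1 \<partial>M)"
      by (rule super[OF _ _ _ y l]) (use n1 in auto)
    have e3: "(\<integral>\<omega>. Z y l 0 \<omega> * 1 \<partial>M) = 1"
      by (simp add: Z_def Y_def U_def P.prob_space)
    show "(\<integral>\<omega>. Z y l 1 \<omega> * indicator (B y x u 1) \<omega> \<partial>M) \<le> 1"
      using e1 e2 e3 by linarith
  qed (use c0 in simp)
  also have "1 / c = exp (- (l * x) + l\<^sup>2/2 * u)"
    unfolding c_def by (simp add: exp_diff)
  finally show ?thesis .
qed

lemma tail:
  assumes i: "1 \<le> i" "i \<le> n" and y: "0 < y"
  shows "measure M {\<omega> \<in> space M. y < \<xi> i \<omega>} \<le> (\<integral>\<omega>. wt \<alpha> (\<xi> i \<omega>) \<partial>M) / wt \<alpha> y"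
proof -
  have w0: "0 < wt \<alpha> y" using y by (simp add: wt_def)
  have [measurable]: "\<xi> i \<in> borel_measurable M" using toM[OF i(2) adapted[OF i(2)]] .
  define S where "S = {\<omega> \<in> space M. y < \<xi> i \<omega>}"
  have Ss: "S \<in> sets M" unfolding S_def by measurable
  have "wt \<alpha> y * measure M S = (\<integral>\<omega>. wt \<alpha> y * indicator S \<omega> \<partial>M)"
    using Ss by (simp add: Int_absorb2 sets.sets_into_space)
  also have "\<dots> \<le> (\<integral>\<omega>. wt \<alpha> (\<xi> i \<omega>) \<partial>M)"
  proof (rule integral_mono)
    show "integrable M (\<lambda>\<omega>. wt \<alpha> y * indicator S \<omega>)" using Ss P.emeasure_finite
      by (simp add: integrable_indicator_iff less_top[symmetric])
    show "integrable M (\<lambda>\<omega>. wt \<alpha> (\<xi> i \<omega>))" using Cn_fin i by simp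
    fix \<omega> show "wt \<alpha> y * indicator S \<omega> \<le> wt \<alpha> (\<xi> i \<omega>)"
      using wt_mono[OF y, of "\<xi> i \<omega>" \<alpha>] alpha wt_nonneg[of \<alpha> "\<xi> i \<omega>"]
      by (auto simp: S_def indicator_def)
  qed
  finally show ?thesis using w0 unfolding S_def by (simp add: field_simps)
qed

lemma main:
  assumes y: "0 < y" and l: "0 < l" "l \<le> y powr (\<alpha> - 1)"
  shows "measure M {\<omega> \<in> space M. \<exists>k \<in> {1..n}.
             partial_sum \<xi> k \<omega> \<ge> x \<and> Upsilon M F \<xi> \<alpha> k \<omega> \<le> u}
     \<le> exp (- (l * x) + l\<^sup>2/2 * u) + (\<Sum>i = 1..n. integral\<^sup>L M (\<lambda>\<omega>. wt \<alpha> (\<xi> i \<omega>))) / wt \<alpha> y"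
proof -
  define E where "E = {\<omega> \<in> space M. \<exists>k \<in> {1..n}.
             partial_sum \<xi> k \<omega> \<ge> x \<and> Upsilon M F \<xi> \<alpha> k \<omega> \<le> u}"
  define T where "T = (\<Union>i\<in>{1..n}. {\<omega> \<in> space M. y < \<xi> i \<omega>})"
  define AU where "AU = (\<Union>k\<in>{1..n}. A y x u k)"
  have Tsi: "{\<omega> \<in> space M. y < \<xi> i \<omega>} \<in> sets M" if "i \<in> {1..n}" for i
  proof -
    have [measurable]: "\<xi> i \<in> borel_measurable M" using toM adapted that by auto
    show ?thesis by measurable
  qed
  have Ts: "T \<in> sets M" unfolding T_def using Tsi by auto
  have AUs: "AU \<in> sets M" unfolding AU_def using A_setsM by auto
  have pos: "AE \<omega> in M. \<forall>i\<in>{1..n}. 0 \<le> real_cond_exp M (F (i-1)) (\<lambda>w. wt \<alpha> (\<xi> i w)) \<omega>"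
  proof (rule AE_finite_allI)
    fix i assume i: "i \<in> {1..n}"
    have "i - 1 \<le> n" using i by auto
    then interpret S: sigma_finite_subalgebra M "F (i-1)" by (rule sfs)
    have [measurable]: "\<xi> i \<in> borel_measurable M" using toM adapted i by auto
    show "AE \<omega> in M. 0 \<le> real_cond_exp M (F (i-1)) (\<lambda>w. wt \<alpha> (\<xi> i w)) \<omega>"
      by (rule S.real_cond_exp_pos) (auto simp: wt_nonneg)
  qed simp
  have incl: "AE \<omega> in M. \<omega> \<in> E \<longrightarrow> \<omega> \<in> AU \<union> T"
    using pos
  proof eventually_elim
    case (elim \<omega>)
    show ?case
    proof (intro impI)
      assume "\<omega> \<in> E"
      then obtain k where k: "k \<in> {1..n}" "partial_sum \<xi> k \<omega> \<ge> x" "Upsilon M F \<xi> \<alpha> k \<omega> \<le> u"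
        and om: "\<omega> \<in> space M" unfolding E_def by auto
      show "\<omega> \<in> AU \<union> T"
      proof (cases "\<omega> \<in> T")
        case False
        then have le: "\<And>i. i \<in> {1..n} \<Longrightarrow> \<xi> i \<omega> \<le> y" using om unfolding T_def by force
        have "Y y k \<omega> = partial_sum \<xi> k \<omega>"
          unfolding Y_def partial_sum_def using le k(1) by (intro sum.cong) (auto simp: \<eta>_def)
        moreover have "U k \<omega> = Upsilon M F \<xi> \<alpha> k \<omega>"
          unfolding U_def Upsilon_def using elim k(1) by (intro sum.cong) (auto simp: v_def)
        ultimately have Hk: "H y x u k \<omega>" using k unfolding H_def by simp
        define j where "j = (LEAST j. 1 \<le> j \<and> H y x u j \<omega>)"
        have j: "1 \<le> j \<and> H y x u j \<omega>" unfolding j_def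
          by (rule LeastI[of _ k]) (use Hk k in auto)
        have jk: "j \<le> k" unfolding j_def by (rule Least_le) (use Hk k in auto)
        have "\<forall>j'\<in>{1..<j}. \<not> H y x u j' \<omega>"
          using not_less_Least[of _ "\<lambda>j. 1 \<le> j \<and> H y x u j \<omega>"] unfolding j_def[symmetric] by auto
        then have "\<omega> \<in> A y x u j" using j om unfolding A_def B_def by auto
        then show ?thesis unfolding AU_def using j jk k(1) by auto
      qed simp
    qed
  qed
  have "measure M E \<le> measure M (AU \<union> T)"
    by (rule P.finite_measure_mono_AE[OF incl]) (use AUs Ts in auto)
  also have "\<dots> \<le> measure M AU + measure M T" by (rule measure_Un_le[OF AUs Ts])
  also have "measure M AU \<le> exp (- (l * x) + l\<^sup>2/2 * u)" unfolding AU_def by (rule hit[OF y l])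
  also have "measure M T \<le> (\<Sum>i = 1..n. measure M {\<omega> \<in> space M. y < \<xi> i \<omega>})"
    unfolding T_def by (rule measure_UNION_le) (use Tsi in auto)
  also have "\<dots> \<le> (\<Sum>i = 1..n. integral\<^sup>L M (\<lambda>\<omega>. wt \<alpha> (\<xi> i \<omega>)) / wt \<alpha> y)"
    by (rule sum_mono) (use tail y in auto)
  also have "\<dots> = (\<Sum>i = 1..n. integral\<^sup>L M (\<lambda>\<omega>. wt \<alpha> (\<xi> i \<omega>))) / wt \<alpha> y"
    by (simp add: sum_divide_distrib)
  finally show ?thesis unfolding E_def by simp
qed

end

theorem theorem2p1:
  fixes M :: "'a measure" and F :: "nat \<Rightarrow> 'a measure"
    and \<xi> :: "nat \<Rightarrow> 'a \<Rightarrow> real" and n :: nat and \<alpha> x u :: real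
  assumes "prob_space M"
    and "n \<ge> 1"
    and sub: "\<And>i. i \<le> n \<Longrightarrow> subalgebra M (F i)"
    and mono: "\<And>i j. i \<le> j \<Longrightarrow> j \<le> n \<Longrightarrow> sets (F i) \<subseteq> sets (F j)"
    and F0: "sets (F 0) = {{}, space M}"
    and xi0: "\<And>\<omega>. \<xi> 0 \<omega> = 0"
    and adapted: "\<And>i. i \<le> n \<Longrightarrow> \<xi> i \<in> borel_measurable (F i)"
    and integ: "\<And>i. i \<le> n \<Longrightarrow> integrable M (\<xi> i)"
    and mart: "\<And>i. 1 \<le> i \<Longrightarrow> i \<le> n \<Longrightarrow>
                 AE \<omega> in M. real_cond_exp M (F (i - 1)) (\<xi> i) \<omega> = 0"
    and alpha: "0 < \<alpha>" "\<alpha> < 1"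
    and Cn_fin: "\<And>i. 1 \<le> i \<Longrightarrow> i \<le> n \<Longrightarrow> integrable M (\<lambda>\<omega>. wt \<alpha> (\<xi> i \<omega>))"
    and xpos: "x > 0" and upos: "u > 0"
  shows "measure M {\<omega> \<in> space M. \<exists>k \<in> {1..n}.
             partial_sum \<xi> k \<omega> \<ge> x \<and> Upsilon M F \<xi> \<alpha> k \<omega> \<le> u}
         \<le> (let C = (\<Sum>i = 1..n. integral\<^sup>L M (\<lambda>\<omega>. wt \<alpha> (\<xi> i \<omega>))) in
            if x < u powr (1 / (2 - \<alpha>)) then
              exp (- (x\<^sup>2 / (2 * u)))
              + C * (x / u) powr (2 / (1 - \<alpha>)) * exp (- ((u / x) powr (\<alpha> / (1 - \<alpha>))))
            else
              exp (- (x powr \<alpha> * (1 - u / (2 * x powr (2 - \<alpha>)))))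
              + C / x\<^sup>2 * exp (- (x powr \<alpha>)))"
  proof -
  have "mset M F \<xi> n \<alpha>"
    unfolding mset_def using assms by blast
  then interpret mset M F \<xi> n \<alpha> .
  define C where "C = (\<Sum>i = 1..n. integral\<^sup>L M (\<lambda>\<omega>. wt \<alpha> (\<xi> i \<omega>)))"
  show ?thesis
  proof (cases "x < u powr (1 / (2 - \<alpha>))")
    case True
    define y where "y = (u/x) powr (1/(1-\<alpha>))"
    note c1 = case1[OF alpha xpos upos, folded y_def]
    have "measure M {\<omega> \<in> space M. \<exists>k \<in> {1..n}.
             partial_sum \<xi> k \<omega> \<ge> x \<and> Upsilon M F \<xi> \<alpha> k \<omega> \<le> u}
       \<le> exp (- (x/u * x) + (x/u)\<^sup>2/2 * u) + C / wt \<alpha> y"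
      unfolding C_def by (rule main) (use c1 xpos upos in auto)
    then show ?thesis using True unfolding Let_def C_def[symmetric] c1(3) c1(4)[of C] by simp
  next
    case False
    have "x powr (\<alpha> - 1) \<le> x powr (\<alpha> - 1)" by simp
    have "measure M {\<omega> \<in> space M. \<exists>k \<in> {1..n}.
             partial_sum \<xi> k \<omega> \<ge> x \<and> Upsilon M F \<xi> \<alpha> k \<omega> \<le> u}
       \<le> exp (- (x powr (\<alpha> - 1) * x) + (x powr (\<alpha> - 1))\<^sup>2/2 * u) + C / wt \<alpha> x"
      unfolding C_def by (rule main) (use xpos in auto)
    then show ?thesis using False
      unfolding Let_def C_def[symmetric] case2[OF alpha xpos upos] by simp
  qed
qed

end
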